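(* Let $V=[n]$, $r\ge0$, and $A,B\subseteq V$. Then $A$ and $B$ are $r$-orthogonal if and only if $$\big(|A\cap B|<r \ \vee\ A\subseteq B\ \vee\ B\subseteq A\ \vee\ |\overline{A\cup B}|<r\ \vee\ |A\cap B|=|\overline{A\cup B}|=r\big)$$ and $$\big(|A\setminus B|<r\ \vee\ A\cap B=\emptyset\ \vee\ \overline{A\cup B}=\emptyset\ \vee\ |B\setminus A|<r\ \vee\ |A\setminus B|=|B\setminus A|=r\big).$$
   Context: $\overline X=V\setminus X$. Hypergraphs on $V$ are identified with their hyperedge sets. $\mathcal K_r(n)$ is the class of hypergraphs $\mathcal E$ on $V$ satisfying: (R0) every $X\subseteq V$ with $|X|\le r$ is in $\mathcal E$; (R1) $A\in\mathcal E\Rightarrow V\setminus A\in\mathcal E$; (R2) $A,B\in\mathcal E$ and $|A\cap B|\ge r\Rightarrow A\cup B\in\mathcal E$. $\mathcal K^0_r(n)$ is the class satisfying (R0) and (R1) only. $\mathrm{cl}_r(H)$ (resp. $\mathrm{cl}^0_r(H)$) is the intersection of all hypergraphs in $\mathcal K_r(n)$ (resp. $\mathcal K^0_r(n)$) containing $H$. $A,B$ are $r$-orthogonal if $\mathrm{cl}_r(\{A,B\})=\mathrm{cl}^0_r(\{A,B\})$, where $\{A,B\}$ is the hypergraph with hyperedges $A,B$. *)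

theory Defs
  imports Main
begin

definition ground :: "nat \<Rightarrow> nat set" where
  "ground n = {1..n}"

definition hypergraph_on :: "nat \<Rightarrow> nat set set \<Rightarrow> bool" where
  "hypergraph_on n E \<longleftrightarrow> E \<subseteq> Pow (ground n)"

definition K0 :: "nat \<Rightarrow> nat \<Rightarrow> nat set set set" where
  "K0 r n = {E. hypergraph_on n E
     \<and> (\<forall>X. X \<subseteq> ground n \<and> card X \<le> r \<longrightarrow> X \<in> E)
     \<and> (\<forall>A\<in>E. ground n - A \<in> E)}"

text \<open>The class K_r(n): conditions (R0), (R1), (R2).\<close>
definition K :: "nat \<Rightarrow> nat \<Rightarrow> nat set set set" where
  "K r n = {E. E \<in> K0 r n
     \<and> (\<forall>A\<in>E. \<forall>B\<in>E. card (A \<inter> B) \<ge> r \<longrightarrow> A \<union> B \<in> E)}"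

definition cl :: "nat \<Rightarrow> nat \<Rightarrow> nat set set \<Rightarrow> nat set set" where
  "cl r n H = \<Inter> {E. E \<in> K r n \<and> H \<subseteq> E}"

definition cl0 :: "nat \<Rightarrow> nat \<Rightarrow> nat set set \<Rightarrow> nat set set" where
  "cl0 r n H = \<Inter> {E. E \<in> K0 r n \<and> H \<subseteq> E}"

definition r_orthogonal :: "nat \<Rightarrow> nat \<Rightarrow> nat set \<Rightarrow> nat set \<Rightarrow> bool" where
  "r_orthogonal r n A B \<longleftrightarrow> cl r n {A, B} = cl0 r n {A, B}"

end

theory Submission
  imports Defs
begin

definition SS :: "nat \<Rightarrow> nat \<Rightarrow> nat set \<Rightarrow> nat set \<Rightarrow> nat set set" where
  "SS r n A B = {X. X \<subseteq> ground n \<and> (card X \<le> r \<or> card (ground n - X) \<le> r)}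
     \<union> {A, B, ground n - A, ground n - B}"

definition R2 :: "nat \<Rightarrow> nat set set \<Rightarrow> bool" where
  "R2 r E \<longleftrightarrow> (\<forall>X\<in>E. \<forall>Y\<in>E. card (X \<inter> Y) \<ge> r \<longrightarrow> X \<union> Y \<in> E)"

lemma fin_ground[simp]: "finite (ground n)" by (simp add: ground_def)

lemma SS_K0:
  assumes "A \<subseteq> ground n" "B \<subseteq> ground n"
  shows "SS r n A B \<in> K0 r n"
proof -
  have h: "hypergraph_on n (SS r n A B)"
    using assms unfolding hypergraph_on_def SS_def by auto
  have c: "\<forall>X\<in>SS r n A B. ground n - X \<in> SS r n A B"
  proof
    fix X assume "X \<in> SS r n A B"
    then show "ground n - X \<in> SS r n A B"
      unfolding SS_def using assms
      by (auto simp: double_diff Diff_subset)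
  qed
  show ?thesis using h c unfolding K0_def SS_def by auto
qed

lemma SS_min:
  assumes "E \<in> K0 r n" "A \<in> E" "B \<in> E"
  shows "SS r n A B \<subseteq> E"
proof
  fix X assume X: "X \<in> SS r n A B"
  have R0: "\<And>X. X \<subseteq> ground n \<Longrightarrow> card X \<le> r \<Longrightarrow> X \<in> E"
   and R1: "\<And>X. X \<in> E \<Longrightarrow> ground n - X \<in> E"
    using assms(1) unfolding K0_def by auto
  show "X \<in> E"
  proof (cases "X \<in> {A, B, ground n - A, ground n - B}")
    case True then show ?thesis using assms R1 by auto
  next
    case False
    then have "X \<subseteq> ground n" "card X \<le> r \<or> card (ground n - X) \<le> r"
      using X unfolding SS_def by auto
    then show ?thesis
    proof (elim disjE)
      assume "card (ground n - X) \<le> r"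
      then have "ground n - X \<in> E" using R0 by auto
      then have "ground n - (ground n - X) \<in> E" by (rule R1)
      then show ?thesis using \<open>X \<subseteq> ground n\<close> by (simp add: double_diff)
    qed (use R0 in auto)
  qed
qed

lemma cl0_eq:
  assumes "A \<subseteq> ground n" "B \<subseteq> ground n"
  shows "cl0 r n {A, B} = SS r n A B"
proof -
  have "SS r n A B \<in> {E. E \<in> K0 r n \<and> {A, B} \<subseteq> E}"
    using SS_K0[OF assms] by (auto simp: SS_def)
  moreover have "\<forall>E\<in>{E. E \<in> K0 r n \<and> {A, B} \<subseteq> E}. SS r n A B \<subseteq> E"
    using SS_min by auto
  ultimately show ?thesis unfolding cl0_def by blast
qed

lemma Pow_K: "Pow (ground n) \<in> K r n"
  unfolding K_def K0_def hypergraph_on_def by auto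

lemma cl_K:
  assumes "H \<subseteq> Pow (ground n)"
  shows "cl r n H \<in> K r n"
proof -
  let ?F = "{E. E \<in> K r n \<and> H \<subseteq> E}"
  have P: "Pow (ground n) \<in> ?F" using assms Pow_K by auto
  have "hypergraph_on n (\<Inter>?F)" unfolding hypergraph_on_def using P by blast
  moreover have "\<forall>X. X \<subseteq> ground n \<and> card X \<le> r \<longrightarrow> X \<in> \<Inter>?F"
    unfolding K_def K0_def by auto
  moreover have "\<forall>A\<in>\<Inter>?F. ground n - A \<in> \<Inter>?F"
    unfolding K_def K0_def by auto
  moreover have "\<forall>A\<in>\<Inter>?F. \<forall>B\<in>\<Inter>?F. card (A \<inter> B) \<ge> r \<longrightarrow> A \<union> B \<in> \<Inter>?F"
    unfolding K_def by auto
  ultimately show ?thesis unfolding cl_def K_def K0_def by blast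
qed

lemma orth_iff:
  assumes "A \<subseteq> ground n" "B \<subseteq> ground n"
  shows "r_orthogonal r n A B \<longleftrightarrow> R2 r (SS r n A B)"
proof
  assume "r_orthogonal r n A B"
  then have "cl r n {A, B} = SS r n A B" unfolding r_orthogonal_def using cl0_eq[OF assms] by simp
  moreover have "cl r n {A, B} \<in> K r n" using cl_K assms by auto
  ultimately show "R2 r (SS r n A B)" unfolding K_def R2_def by auto
next
  assume R: "R2 r (SS r n A B)"
  have SK: "SS r n A B \<in> K r n" using SS_K0[OF assms] R unfolding K_def R2_def by auto
  have "cl r n {A, B} \<subseteq> SS r n A B" unfolding cl_def using SK by (auto simp: SS_def)
  moreover have "cl0 r n {A, B} \<subseteq> cl r n {A, B}" unfolding cl_def cl0_def K_def by auto
  ultimately show "r_orthogonal r n A B" unfolding r_orthogonal_def using cl0_eq[OF assms] by auto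
qed


lemma R2_iff_pairs:
  assumes AV: "A \<subseteq> ground n" and BV: "B \<subseteq> ground n"
  defines "V \<equiv> ground n"
  shows "R2 r (SS r n A B) \<longleftrightarrow>
    ((card (A \<inter> B) \<ge> r \<longrightarrow> A \<union> B \<in> SS r n A B) \<and>
     (card ((V-A) \<inter> (V-B)) \<ge> r \<longrightarrow> (V-A) \<union> (V-B) \<in> SS r n A B) \<and>
     (card (A \<inter> (V-B)) \<ge> r \<longrightarrow> A \<union> (V-B) \<in> SS r n A B) \<and>
     (card ((V-A) \<inter> B) \<ge> r \<longrightarrow> (V-A) \<union> B \<in> SS r n A B))"
    (is "_ \<longleftrightarrow> ?P")
proof
  assume "R2 r (SS r n A B)"
  then show ?P unfolding R2_def SS_def V_def by blast
next
  assume P: ?P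
  show "R2 r (SS r n A B)" unfolding R2_def
  proof (intro ballI impI)
    fix X Y assume X: "X \<in> SS r n A B" and Y: "Y \<in> SS r n A B" and c: "r \<le> card (X \<inter> Y)"
    have XV: "X \<subseteq> V" and YV: "Y \<subseteq> V" using X Y AV BV unfolding SS_def V_def by auto
    have big: "X \<union> Y \<in> SS r n A B" if "card (V - Z) \<le> r" "Z \<subseteq> X \<union> Y" for Z
    proof -
      have "card (V - (X \<union> Y)) \<le> card (V - Z)"
        by (rule card_mono) (use that in \<open>auto simp: V_def\<close>)
      then show ?thesis using that XV YV unfolding SS_def V_def by auto
    qed
    have small: "X \<union> Y \<in> SS r n A B" if "card X \<le> r" 
    proof -
      have "finite X" using finite_subset[OF XV] unfolding V_def by simp
      moreover have "card (X \<inter> Y) \<le> card X" using calculation by (simp add: card_mono)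
      ultimately have "X \<inter> Y = X" using card_subset_eq[of X "X \<inter> Y"] that c by auto
      then show ?thesis using Y by (metis Un_absorb1 inf.absorb_iff1)
    qed
    have small2: "X \<union> Y \<in> SS r n A B" if "card Y \<le> r" 
    proof -
      have "finite Y" using finite_subset[OF YV] unfolding V_def by simp
      moreover have "card (X \<inter> Y) \<le> card Y" using calculation by (simp add: card_mono)
      ultimately have "X \<inter> Y = Y" using card_subset_eq[of Y "X \<inter> Y"] that c by auto
      then show ?thesis using X by (metis Un_absorb2 inf.absorb_iff2)
    qed
    show "X \<union> Y \<in> SS r n A B"
    proof (cases "card X \<le> r \<or> card Y \<le> r \<or> card (V - X) \<le> r \<or> card (V - Y) \<le> r")
      case True
      then show ?thesis using small small2 big[of X] big[of Y] by auto
    next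
      case False
      then have XT: "X \<in> {A, B, V - A, V - B}" and YT: "Y \<in> {A, B, V - A, V - B}"
        using X Y unfolding SS_def V_def by auto
      have VS: "V \<in> SS r n A B" unfolding SS_def V_def by simp
      have UA: "A \<union> (V - A) = V" "(V - A) \<union> A = V" using AV unfolding V_def by auto
      have UB: "B \<union> (V - B) = V" "(V - B) \<union> B = V" using BV unfolding V_def by auto
      from P have P1: "card (A \<inter> B) \<ge> r \<Longrightarrow> A \<union> B \<in> SS r n A B"
        and P2: "card ((V-A) \<inter> (V-B)) \<ge> r \<Longrightarrow> (V-A) \<union> (V-B) \<in> SS r n A B"
        and P3: "card (A \<inter> (V-B)) \<ge> r \<Longrightarrow> A \<union> (V-B) \<in> SS r n A B"
        and P4: "card ((V-A) \<inter> B) \<ge> r \<Longrightarrow> (V-A) \<union> B \<in> SS r n A B" by auto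
      show ?thesis using XT YT c X
        apply (elim insertE emptyE)
        apply (metis P1 P2 P3 P4 Un_commute Int_commute Un_absorb UA UB VS)+
        done
    qed
  qed
qed




lemma mem_SS:
  assumes "Z \<subseteq> ground n"
  shows "Z \<in> SS r n A B \<longleftrightarrow> card Z \<le> r \<or> card (ground n - Z) \<le> r \<or> Z \<in> {A, B, ground n - A, ground n - B}"
  using assms unfolding SS_def by auto

lemma gen_pair:
  assumes "P \<subseteq> ground n" "Q \<subseteq> ground n" "P \<union> Q \<in> SS r n A B" "r \<le> card (P \<inter> Q)"
  shows "card (ground n - (P \<union> Q)) \<le> r \<or> P = Q \<or> P \<union> Q \<in> {A, B, ground n - A, ground n - B}"
proof -
  have f: "finite (P \<union> Q)" using assms(1,2) finite_subset by (metis fin_ground le_sup_iff)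
  have "P = Q" if "card (P \<union> Q) \<le> r"
  proof -
    have "card (P \<inter> Q) \<le> card (P \<union> Q)" by (rule card_mono[OF f]) blast
    then have "card (P \<inter> Q) = card (P \<union> Q)" using that assms(4) by linarith
    then have "P \<inter> Q = P \<union> Q" using card_subset_eq[OF f, of "P \<inter> Q"] by auto
    then show ?thesis by blast
  qed
  then show ?thesis using assms(1-3) mem_SS[of "P \<union> Q" n r A B] by auto
qed


lemma pair1:
  assumes AV: "A \<subseteq> ground n" and BV: "B \<subseteq> ground n"
  shows "(card (A \<inter> B) \<ge> r \<longrightarrow> A \<union> B \<in> SS r n A B) \<longleftrightarrow>
    (card (A \<inter> B) < r \<or> A \<subseteq> B \<or> B \<subseteq> A \<or> card (ground n - (A \<union> B)) \<le> r)"
proof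
  assume h: "card (A \<inter> B) \<ge> r \<longrightarrow> A \<union> B \<in> SS r n A B"
  show "card (A \<inter> B) < r \<or> A \<subseteq> B \<or> B \<subseteq> A \<or> card (ground n - (A \<union> B)) \<le> r"
  proof (cases "card (A \<inter> B) < r")
    case False
    then have "card (ground n - (A \<union> B)) \<le> r \<or> A = B \<or> A \<union> B \<in> {A, B, ground n - A, ground n - B}"
      using gen_pair[OF AV BV] h by auto
    then show ?thesis
    proof (elim disjE insertE emptyE)
    qed (use AV BV in blast)+
  qed simp
next
  have U: "A \<union> B \<subseteq> ground n" using AV BV by auto
  assume "card (A \<inter> B) < r \<or> A \<subseteq> B \<or> B \<subseteq> A \<or> card (ground n - (A \<union> B)) \<le> r"
  then show "card (A \<inter> B) \<ge> r \<longrightarrow> A \<union> B \<in> SS r n A B"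
  proof (elim disjE)
    assume "card (ground n - (A \<union> B)) \<le> r"
    then show ?thesis using mem_SS[OF U, of r A B] by blast
  qed (auto simp: SS_def Un_absorb1 Un_absorb2)
qed

lemma pair2:
  assumes AV: "A \<subseteq> ground n" and BV: "B \<subseteq> ground n"
  shows "(card ((ground n-A) \<inter> (ground n-B)) \<ge> r \<longrightarrow> (ground n-A) \<union> (ground n-B) \<in> SS r n A B) \<longleftrightarrow>
    (card (ground n - (A \<union> B)) < r \<or> A \<subseteq> B \<or> B \<subseteq> A \<or> card (A \<inter> B) \<le> r)"
proof -
  define V where "V = ground n"
  have e1: "(V-A) \<inter> (V-B) = V - (A \<union> B)" by blast
  have e2: "V - ((V-A) \<union> (V-B)) = A \<inter> B" using AV BV V_def by blast
  have s: "V - A \<subseteq> ground n" "V - B \<subseteq> ground n" unfolding V_def by auto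
  have AV': "A \<subseteq> V" and BV': "B \<subseteq> V" using AV BV V_def by auto
  have "(card ((V-A) \<inter> (V-B)) \<ge> r \<longrightarrow> (V-A) \<union> (V-B) \<in> SS r n A B) \<longleftrightarrow>
    (card (V - (A \<union> B)) < r \<or> A \<subseteq> B \<or> B \<subseteq> A \<or> card (A \<inter> B) \<le> r)"
  proof
    assume h: "card ((V-A) \<inter> (V-B)) \<ge> r \<longrightarrow> (V-A) \<union> (V-B) \<in> SS r n A B"
    show "card (V - (A \<union> B)) < r \<or> A \<subseteq> B \<or> B \<subseteq> A \<or> card (A \<inter> B) \<le> r"
    proof (cases "card (V - (A \<union> B)) < r")
      case False
      then have "card (ground n - ((V-A) \<union> (V-B))) \<le> r \<or> V - A = V - B \<or> (V-A) \<union> (V-B) \<in> {A, B, ground n - A, ground n - B}"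
        using gen_pair[OF s, of r A B] h e1 by auto
      then have "card (A \<inter> B) \<le> r \<or> V - A = V - B \<or> (V-A) \<union> (V-B) \<in> {A, B, V - A, V - B}"
        using e2 unfolding V_def by simp
      then show ?thesis
      proof (elim disjE insertE emptyE)
      qed (use AV' BV' in blast)+
    qed simp
  next
    assume "card (V - (A \<union> B)) < r \<or> A \<subseteq> B \<or> B \<subseteq> A \<or> card (A \<inter> B) \<le> r"
    then show "card ((V-A) \<inter> (V-B)) \<ge> r \<longrightarrow> (V-A) \<union> (V-B) \<in> SS r n A B"
    proof (elim disjE)
      assume "card (V - (A \<union> B)) < r"
      then show ?thesis using e1 by simp
    next
      assume "A \<subseteq> B"
      then have "(V-A) \<union> (V-B) = V - A" by blast
      then show ?thesis unfolding SS_def V_def by simp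
    next
      assume "B \<subseteq> A"
      then have "(V-A) \<union> (V-B) = V - B" by blast
      then show ?thesis unfolding SS_def V_def by simp
    next
      assume "card (A \<inter> B) \<le> r"
      then show ?thesis using mem_SS[of "(V-A) \<union> (V-B)" n r A B] s e2 unfolding V_def by simp
    qed
  qed
  then show ?thesis unfolding V_def .
qed

lemma pair3:
  assumes AV: "A \<subseteq> ground n" and BV: "B \<subseteq> ground n"
  shows "(card (A \<inter> (ground n-B)) \<ge> r \<longrightarrow> A \<union> (ground n-B) \<in> SS r n A B) \<longleftrightarrow>
    (card (A - B) < r \<or> A \<inter> B = {} \<or> ground n - (A \<union> B) = {} \<or> card (B - A) \<le> r)"
proof -
  define V where "V = ground n"
  have e1: "A \<inter> (V-B) = A - B" using AV V_def by blast
  have e2: "V - (A \<union> (V-B)) = B - A" using AV BV V_def by blast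
  have s: "A \<subseteq> ground n" "V - B \<subseteq> ground n" using AV unfolding V_def by auto
  have AV': "A \<subseteq> V" and BV': "B \<subseteq> V" using AV BV V_def by auto
  have "(card (A \<inter> (V-B)) \<ge> r \<longrightarrow> A \<union> (V-B) \<in> SS r n A B) \<longleftrightarrow>
    (card (A - B) < r \<or> A \<inter> B = {} \<or> V - (A \<union> B) = {} \<or> card (B - A) \<le> r)"
  proof
    assume h: "card (A \<inter> (V-B)) \<ge> r \<longrightarrow> A \<union> (V-B) \<in> SS r n A B"
    show "card (A - B) < r \<or> A \<inter> B = {} \<or> V - (A \<union> B) = {} \<or> card (B - A) \<le> r"
    proof (cases "card (A - B) < r")
      case False
      then have "card (ground n - (A \<union> (V-B))) \<le> r \<or> A = V - B \<or> A \<union> (V-B) \<in> {A, B, ground n - A, ground n - B}"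
        using gen_pair[OF s, of r A B] h e1 by auto
      then have "card (B - A) \<le> r \<or> A = V - B \<or> A \<union> (V-B) \<in> {A, B, V - A, V - B}"
        using e2 unfolding V_def by simp
      then show ?thesis
      proof (elim disjE insertE emptyE)
      qed (use AV' BV' in blast)+
    qed simp
  next
    assume "card (A - B) < r \<or> A \<inter> B = {} \<or> V - (A \<union> B) = {} \<or> card (B - A) \<le> r"
    then show "card (A \<inter> (V-B)) \<ge> r \<longrightarrow> A \<union> (V-B) \<in> SS r n A B"
    proof (elim disjE)
      assume "card (A - B) < r"
      then show ?thesis using e1 by simp
    next
      assume "A \<inter> B = {}"
      then have "A \<union> (V-B) = V - B" using AV' by blast
      then show ?thesis unfolding SS_def V_def by simp
    next
      assume "V - (A \<union> B) = {}"
      then have "A \<union> (V-B) = A" by blast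
      then show ?thesis unfolding SS_def V_def by simp
    next
      assume "card (B - A) \<le> r"
      then show ?thesis using mem_SS[of "A \<union> (V-B)" n r A B] s e2 unfolding V_def by simp
    qed
  qed
  then show ?thesis unfolding V_def .
qed


lemma comb: "((x < r \<or> S \<or> y \<le> r) \<and> (y < r \<or> S \<or> x \<le> r)) \<longleftrightarrow> (x < r \<or> S \<or> y < r \<or> (x = r \<and> y = (r::nat)))"
  by auto

lemma SS_sym: "SS r n A B = SS r n B A" unfolding SS_def by auto

theorem mainTheorem14:
  fixes n r :: nat and A B :: "nat set"
  assumes "A \<subseteq> ground n" and "B \<subseteq> ground n"
  shows "r_orthogonal r n A B \<longleftrightarrow>
    ((card (A \<inter> B) < r \<or> A \<subseteq> B \<or> B \<subseteq> A
      \<or> card (ground n - (A \<union> B)) < r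
      \<or> (card (A \<inter> B) = r \<and> card (ground n - (A \<union> B)) = r))
     \<and>
     (card (A - B) < r \<or> A \<inter> B = {} \<or> ground n - (A \<union> B) = {}
      \<or> card (B - A) < r
      \<or> (card (A - B) = r \<and> card (B - A) = r)))"
proof -
  have p4: "(card ((ground n-A) \<inter> B) \<ge> r \<longrightarrow> (ground n-A) \<union> B \<in> SS r n A B) \<longleftrightarrow>
    (card (B - A) < r \<or> A \<inter> B = {} \<or> ground n - (A \<union> B) = {} \<or> card (A - B) \<le> r)"
    using pair3[OF assms(2,1), of r] by (simp add: SS_sym Int_commute Un_commute)
  have "r_orthogonal r n A B \<longleftrightarrow>
    ((card (A \<inter> B) < r \<or> A \<subseteq> B \<or> B \<subseteq> A \<or> card (ground n - (A \<union> B)) \<le> r) \<and>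
    (card (ground n - (A \<union> B)) < r \<or> A \<subseteq> B \<or> B \<subseteq> A \<or> card (A \<inter> B) \<le> r)) \<and>
    ((card (A - B) < r \<or> A \<inter> B = {} \<or> ground n - (A \<union> B) = {} \<or> card (B - A) \<le> r) \<and>
    (card (B - A) < r \<or> A \<inter> B = {} \<or> ground n - (A \<union> B) = {} \<or> card (A - B) \<le> r))"
    unfolding orth_iff[OF assms] R2_iff_pairs[OF assms, of r] pair1[OF assms, of r]
      pair2[OF assms, of r] pair3[OF assms, of r] p4 by (simp only: conj_assoc)
  moreover have c1: "((card (A \<inter> B) < r \<or> A \<subseteq> B \<or> B \<subseteq> A \<or> card (ground n - (A \<union> B)) \<le> r) \<and>
    (card (ground n - (A \<union> B)) < r \<or> A \<subseteq> B \<or> B \<subseteq> A \<or> card (A \<inter> B) \<le> r)) \<longleftrightarrow>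
    (card (A \<inter> B) < r \<or> A \<subseteq> B \<or> B \<subseteq> A
      \<or> card (ground n - (A \<union> B)) < r
      \<or> (card (A \<inter> B) = r \<and> card (ground n - (A \<union> B)) = r))"
    using comb[of "card (A \<inter> B)" r "A \<subseteq> B \<or> B \<subseteq> A" "card (ground n - (A \<union> B))"] by blast
  moreover have c2: "((card (A - B) < r \<or> A \<inter> B = {} \<or> ground n - (A \<union> B) = {} \<or> card (B - A) \<le> r) \<and>
    (card (B - A) < r \<or> A \<inter> B = {} \<or> ground n - (A \<union> B) = {} \<or> card (A - B) \<le> r)) \<longleftrightarrow>
    (card (A - B) < r \<or> A \<inter> B = {} \<or> ground n - (A \<union> B) = {}
      \<or> card (B - A) < r
      \<or> (card (A - B) = r \<and> card (B - A) = r))"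
    using comb[of "card (A - B)" r "A \<inter> B = {} \<or> ground n - (A \<union> B) = {}" "card (B - A)"] by blast
  ultimately show ?thesis by (simp only:)
qed
end
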